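(* Assume that for every $x\in V$ the functions $s\mapsto H(x,s)$ and $s\mapsto f_l(x,s)$ ($l=1,\dots,m$) are nondecreasing. If $(u^1,\dots,u^m)$ solves the discrete system (S), then $u^i(x)\,u^j(x)=0$ for all $x\in V$ and all $i\neq j$.
   Context: Let $G=(V,E)$ be a finite, connected, undirected graph with at least two vertices. For $x,y\in V$, $d(x,y)$ denotes the graph (shortest-path) distance, and $\deg(x)=|\{y\in V:(x,y)\in E\}|$. The boundary of $G$ is $$\partial G=\Big\{x\in V:\ \exists\, y\in V \text{ with } \tfrac{1}{\deg(x)}\textstyle\sum_{(x,z)\in E} d(z,y)<d(x,y)\Big\},$$ and the interior is $G^o=V\setminus\partial G$. For $r:V\to\mathbb{R}$, the mean value at $x$ is $\overline{r}(x)=\frac{1}{\deg(x)}\sum_{(x,y)\in E} r(y)$. Fix an integer $m\ge1$. Let $H:V\times[0,\infty)\to\mathbb{R}$ and $f_l:V\times[0,\infty)\to\mathbb{R}$ ($l=1,\dots,m$) be continuous in the second variable with $H(x,0)=0$ and $f_l(x,0)=0$ for all $x\in V$; they are extended to negative arguments by $H(x,s)=-H(x,-s)$ and $f_l(x,s)=-f_l(x,-s)$ for $s<0$. Let $\phi^l:\partial G\to[0,\infty)$ ($l=1,\dots,m$) be boundary data satisfying $\phi^i(x)\phi^j(x)=0$ for all $x\in\partial G$ and $i\neq j$. The discrete system (S) for $(u^1,\dots,u^m)$, $u^l:V\to\mathbb{R}$, is: for every $l=1,\dots,m$, $$u^l(x)=\max\Big(H\Big(x,\ \overline{u}^l(x)-\sum_{p\neq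 l}\overline{u}^p(x)\Big)-f_l\big(x,u^l(x)\big),\ 0\Big)\quad (x\in G^o),\qquad u^l(x)=\phi^l(x)\quad (x\in\partial G).$$ *)

theory Defs
  imports "HOL-Analysis.Analysis"
begin

definition graph_edges :: "('v \<Rightarrow> 'v \<Rightarrow> bool) \<Rightarrow> ('v \<times> 'v) set" where
  "graph_edges E = {(x, y). E x y}"

definition fin_conn_graph :: "'v set \<Rightarrow> ('v \<Rightarrow> 'v \<Rightarrow> bool) \<Rightarrow> bool" where
  "fin_conn_graph V E \<longleftrightarrow>
     finite V \<and> 2 \<le> card V
     \<and> (\<forall>x y. E x y \<longrightarrow> x \<in> V \<and> y \<in> V)
     \<and> (\<forall>x y. E x y \<longrightarrow> E y x)
     \<and> (\<forall>x. \<not> E x x)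
     \<and> (\<forall>x\<in>V. \<forall>y\<in>V. \<exists>n. (x, y) \<in> graph_edges E ^^ n)"

definition gdist :: "('v \<Rightarrow> 'v \<Rightarrow> bool) \<Rightarrow> 'v \<Rightarrow> 'v \<Rightarrow> nat" where
  "gdist E x y = (LEAST n. (x, y) \<in> graph_edges E ^^ n)"

definition gdeg :: "'v set \<Rightarrow> ('v \<Rightarrow> 'v \<Rightarrow> bool) \<Rightarrow> 'v \<Rightarrow> nat" where
  "gdeg V E x = card {y \<in> V. E x y}"

definition gmean :: "'v set \<Rightarrow> ('v \<Rightarrow> 'v \<Rightarrow> bool) \<Rightarrow> ('v \<Rightarrow> real) \<Rightarrow> 'v \<Rightarrow> real" where
  "gmean V E r x = (\<Sum>y\<in>{y \<in> V. E x y}. r y) / real (gdeg V E x)"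

definition gboundary :: "'v set \<Rightarrow> ('v \<Rightarrow> 'v \<Rightarrow> bool) \<Rightarrow> 'v set" where
  "gboundary V E = {x \<in> V. \<exists>y\<in>V.
      gmean V E (\<lambda>z. real (gdist E z y)) x < real (gdist E x y)}"

definition ginterior :: "'v set \<Rightarrow> ('v \<Rightarrow> 'v \<Rightarrow> bool) \<Rightarrow> 'v set" where
  "ginterior V E = V - gboundary V E"

definition odd_ext_fun :: "(real \<Rightarrow> real) \<Rightarrow> bool" where
  "odd_ext_fun h \<longleftrightarrow> continuous_on {0..} h \<and> h 0 = 0 \<and> (\<forall>s<0. h s = - h (- s))"

definition solves_S ::
  "'v set \<Rightarrow> ('v \<Rightarrow> 'v \<Rightarrow> bool) \<Rightarrow> nat \<Rightarrow> ('v \<Rightarrow> real \<Rightarrow> real)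
   \<Rightarrow> (nat \<Rightarrow> 'v \<Rightarrow> real \<Rightarrow> real) \<Rightarrow> (nat \<Rightarrow> 'v \<Rightarrow> real) \<Rightarrow> (nat \<Rightarrow> 'v \<Rightarrow> real) \<Rightarrow> bool" where
  "solves_S V E m H f \<phi> u \<longleftrightarrow>
     (\<forall>l\<in>{1..m}.
        (\<forall>x\<in>ginterior V E.
           u l x = max (H x (gmean V E (u l) x - (\<Sum>p\<in>{1..m} - {l}. gmean V E (u p) x))
                        - f l x (u l x)) 0)
      \<and> (\<forall>x\<in>gboundary V E. u l x = \<phi> l x))"

end

theory Submission
  imports Defs
begin

theorem lemma1:
  fixes V :: "'v set" and E :: "'v \<Rightarrow> 'v \<Rightarrow> bool" and m :: nat
    and H :: "'v \<Rightarrow> real \<Rightarrow> real" and f :: "nat \<Rightarrow> 'v \<Rightarrow> real \<Rightarrow> real"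
    and \<phi> :: "nat \<Rightarrow> 'v \<Rightarrow> real" and u :: "nat \<Rightarrow> 'v \<Rightarrow> real"
  assumes G: "fin_conn_graph V E"
    and m: "1 \<le> m"
    and H: "\<And>x. x \<in> V \<Longrightarrow> odd_ext_fun (H x)"
    and f: "\<And>l x. l \<in> {1..m} \<Longrightarrow> x \<in> V \<Longrightarrow> odd_ext_fun (f l x)"
    and Hmono: "\<And>x. x \<in> V \<Longrightarrow> mono_on {0..} (H x)"
    and fmono: "\<And>l x. l \<in> {1..m} \<Longrightarrow> x \<in> V \<Longrightarrow> mono_on {0..} (f l x)"
    and phi_nonneg: "\<And>l x. l \<in> {1..m} \<Longrightarrow> x \<in> gboundary V E \<Longrightarrow> 0 \<le> \<phi> l x"
    and phi_disj: "\<And>i j x. i \<in> {1..m} \<Longrightarrow> j \<in> {1..m} \<Longrightarrow> i \<noteq> j \<Longrightarrow>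
                     x \<in> gboundary V E \<Longrightarrow> \<phi> i x * \<phi> j x = 0"
    and sol: "solves_S V E m H f \<phi> u"
  shows "\<forall>x\<in>V. \<forall>i\<in>{1..m}. \<forall>j\<in>{1..m}. i \<noteq> j \<longrightarrow> u i x * u j x = 0"
proof (intro ballI impI)
  fix x i j assume xV: "x \<in> V" and i: "i \<in> {1..m}" and j: "j \<in> {1..m}" and ij: "i \<noteq> j"
  have sol': "\<And>l. l \<in> {1..m} \<Longrightarrow> (\<forall>x\<in>ginterior V E.
           u l x = max (H x (gmean V E (u l) x - (\<Sum>p\<in>{1..m} - {l}. gmean V E (u p) x))
                        - f l x (u l x)) 0) \<and> (\<forall>x\<in>gboundary V E. u l x = \<phi> l x)"
    using sol unfolding solves_S_def by blast
  have nonneg: "\<And>l y. l \<in> {1..m} \<Longrightarrow> y \<in> V \<Longrightarrow> 0 \<le> u l y"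
  proof -
    fix l y assume l: "l \<in> {1..m}" and y: "y \<in> V"
    show "0 \<le> u l y"
    proof (cases "y \<in> gboundary V E")
      case True thus ?thesis using sol'[OF l] phi_nonneg[OF l True] by simp
    next
      case False hence "y \<in> ginterior V E" using y unfolding ginterior_def by blast
      thus ?thesis using sol'[OF l] by (metis max.cobounded2)
    qed
  qed
  have Enb: "\<And>y. E x y \<Longrightarrow> y \<in> V" using G unfolding fin_conn_graph_def by blast
  have meannn: "\<And>l. l \<in> {1..m} \<Longrightarrow> 0 \<le> gmean V E (u l) x"
    unfolding gmean_def by (rule divide_nonneg_nonneg, rule sum_nonneg) (auto intro: nonneg)
  show "u i x * u j x = 0"
  proof (cases "x \<in> gboundary V E")
    case True thus ?thesis using sol'[OF i] sol'[OF j] phi_disj[OF i j ij True] by simp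
  next
    case False hence xi: "x \<in> ginterior V E" using xV unfolding ginterior_def by blast
    define a where "a l = gmean V E (u l) x - (\<Sum>p\<in>{1..m} - {l}. gmean V E (u p) x)" for l
    have key: "u l x > 0 \<Longrightarrow> a l > 0" if l: "l \<in> {1..m}" for l
    proof -
      assume pos: "u l x > 0"
      have eq: "u l x = max (H x (a l) - f l x (u l x)) 0" using sol'[OF l] xi unfolding a_def by blast
      have "f l x (u l x) \<ge> f l x 0"
        using mono_onD[OF fmono[OF l xV], of 0 "u l x"] pos by auto
      moreover have "f l x 0 = 0" using f[OF l xV] unfolding odd_ext_fun_def by blast
      ultimately have Hp: "H x (a l) > 0" using eq pos by (smt (verit))
      show "a l > 0"
      proof (rule ccontr)
        assume "\<not> a l > 0"
        hence le: "a l \<le> 0" by simp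
        have H0: "H x 0 = 0" using H[OF xV] unfolding odd_ext_fun_def by blast
        show False
        proof (cases "a l = 0")
          case True thus False using Hp H0 by simp
        next
          case False hence neg: "a l < 0" using le by simp
          have "H x (a l) = - H x (- a l)" using H[OF xV] neg unfolding odd_ext_fun_def by blast
          moreover have "H x 0 \<le> H x (- a l)" using mono_onD[OF Hmono[OF xV], of 0 "- a l"] neg by auto
          ultimately show False using Hp H0 by simp
        qed
      qed
    qed
    show ?thesis
    proof (rule ccontr)
      assume "u i x * u j x \<noteq> 0"
      hence "u i x > 0" "u j x > 0" using nonneg[OF i xV] nonneg[OF j xV] by auto
      hence ai: "a i > 0" and aj: "a j > 0" using key i j by auto
      have fin: "finite ({1..m} - {i})" by simp
      have s1: "(\<Sum>p\<in>{1..m} - {i}. gmean V E (u p) x) = gmean V E (u j) x + (\<Sum>p\<in>{1..m} - {i} - {j}. gmean V E (u p) x)"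
        using j ij by (subst sum.remove[of _ j]) auto
      have s2: "(\<Sum>p\<in>{1..m} - {j}. gmean V E (u p) x) = gmean V E (u i) x + (\<Sum>p\<in>{1..m} - {j} - {i}. gmean V E (u p) x)"
        using i ij by (subst sum.remove[of _ i]) auto
      have se: "{1..m} - {j} - {i} = {1..m} - {i} - {j}" by blast
      have "0 \<le> (\<Sum>p\<in>{1..m} - {i} - {j}. gmean V E (u p) x)"
        by (rule sum_nonneg, rule meannn) auto
      then show False using ai aj s1 s2 unfolding a_def se by linarith
    qed
  qed
qed

end
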